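(* Let $l\in\mathbb{N}\setminus\{1\}$ and let $(S_i,+)$, $i=1,\dots,l$, be countable adequate commutative partial semigroups. For each $i\in\{1,\dots,l\}$ let $\langle x_{i,n}\rangle_{n=1}^{\infty}$ be an adequate sequence in $S_i$. Let $m,r\in\mathbb{N}$ and suppose $S_1\times S_2\times\cdots\times S_l=\bigcup_{j=1}^{r}D_j$. Then there exist $j\in\{1,\dots,r\}$, for each $i\in\{1,\dots,l-1\}$ a product subsystem $\langle y_{i,n}\rangle_{n=1}^{m}$ of $FS(\langle x_{i,n}\rangle_{n=1}^{\infty})$, and an (infinite) product subsystem $\langle y_{l,n}\rangle_{n=1}^{\infty}$ of $FS(\langle x_{l,n}\rangle_{n=1}^{\infty})$ such that \[ \Big(FS(\langle y_{1,n}\rangle_{n=1}^{m})\times\cdots\times FS(\langle y_{l-1,n}\rangle_{n=1}^{m})\Big)\times FS(\langle y_{l,n}\rangle_{n=1}^{\infty})\subseteq D_j . \]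
   Context: A partial semigroup $(S,+)$ is a set with a map $+$ from a subset of $S\times S$ to $S$ such that $(a+b)+c=a+(b+c)$ whenever either side is defined (then both are defined and equal). It is commutative if for all $a,b$, $a+b$ is defined iff $b+a$ is defined, and then they are equal. For $s\in S$, $\varphi(s)=\{t: s+t\text{ defined}\}$; for finite nonempty $H\subseteq S$, $\sigma(H)=\bigcap_{s\in H}\varphi(s)$; $S$ is adequate if all $\sigma(H)\ne\emptyset$. For a sequence $\langle x_n\rangle$, $FS(\langle x_n\rangle_{n=k}^{\infty})$ is the set of sums $\sum_{n\in F}x_n$ over finite nonempty $F\subseteq\{k,k+1,\dots\}$, and $FS(\langle x_n\rangle_{n=1}^{m})$ the set of such sums over nonempty $F\subseteq\{1,\dots,m\}$. A sequence $\langle x_n\rangle_{n=1}^\infty$ in $S$ is adequate if every $\sum_{n\in F}x_n$ ($F$ finite nonempty) is defined and for every finite nonempty $H\subseteq S$ there is $m$ with $FS(\langle x_n\rangle_{n=m}^\infty)\subseteq\sigma(H)$. Given an adequate sequence $\langle y_n\rangle$ and $k\in\mathbb{N}$, a sequence $\langle x_n\rangle_{n=1}^{m}$ (resp. $\langle x_n\rangle_{n=1}^{\infty}$) is a product subsystem of $FS(\langle y_n\rangle_{n=k}^{\infty})$ if there are finite nonempty $H_n\subseteq\mathbb{N}$ with $\min H_1\ge k$, $\max H_n<\min H_{n+1}$ for all relevant $n$, and $x_n=\sum_{t\in H_n}y_t$ for all relevant $n$. *)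

theory Defs
  imports Main "HOL-Library.Countable_Set" "HOL-Library.FuncSet"
begin

text \<open>A partial operation on a carrier S is modelled as f :: 'a => 'a => 'a option,
  where f a b = None means a + b is undefined.\<close>

definition partial_semigroup :: "'a set \<Rightarrow> ('a \<Rightarrow> 'a \<Rightarrow> 'a option) \<Rightarrow> bool" where
  "partial_semigroup S f \<longleftrightarrow>
     (\<forall>a\<in>S. \<forall>b\<in>S. \<forall>c. f a b = Some c \<longrightarrow> c \<in> S) \<and>
     (\<forall>a\<in>S. \<forall>b\<in>S. \<forall>c\<in>S.
        Option.bind (f a b) (\<lambda>x. f x c) = Option.bind (f b c) (\<lambda>y. f a y))"

definition commutative_ps :: "'a set \<Rightarrow> ('a \<Rightarrow> 'a \<Rightarrow> 'a option) \<Rightarrow> bool" where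
  "commutative_ps S f \<longleftrightarrow> (\<forall>a\<in>S. \<forall>b\<in>S. f a b = f b a)"

definition phi :: "'a set \<Rightarrow> ('a \<Rightarrow> 'a \<Rightarrow> 'a option) \<Rightarrow> 'a \<Rightarrow> 'a set" where
  "phi S f s = {t \<in> S. f s t \<noteq> None}"

definition sigma :: "'a set \<Rightarrow> ('a \<Rightarrow> 'a \<Rightarrow> 'a option) \<Rightarrow> 'a set \<Rightarrow> 'a set" where
  "sigma S f H = S \<inter> (\<Inter>s\<in>H. phi S f s)"

definition adequate :: "'a set \<Rightarrow> ('a \<Rightarrow> 'a \<Rightarrow> 'a option) \<Rightarrow> bool" where
  "adequate S f \<longleftrightarrow> (\<forall>H. finite H \<and> H \<noteq> {} \<and> H \<subseteq> S \<longrightarrow> sigma S f H \<noteq> {})"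

fun osum :: "('a \<Rightarrow> 'a \<Rightarrow> 'a option) \<Rightarrow> (nat \<Rightarrow> 'a) \<Rightarrow> nat list \<Rightarrow> 'a option" where
  "osum f x [] = None"
| "osum f x [n] = Some (x n)"
| "osum f x (n # ns) = Option.bind (osum f x ns) (\<lambda>s. f (x n) s)"

definition fsum :: "('a \<Rightarrow> 'a \<Rightarrow> 'a option) \<Rightarrow> (nat \<Rightarrow> 'a) \<Rightarrow> nat set \<Rightarrow> 'a option" where
  "fsum f x F = osum f x (sorted_list_of_set F)"

definition FS :: "('a \<Rightarrow> 'a \<Rightarrow> 'a option) \<Rightarrow> (nat \<Rightarrow> 'a) \<Rightarrow> nat set \<Rightarrow> 'a set" where
  "FS f x A = {s. \<exists>F. finite F \<and> F \<noteq> {} \<and> F \<subseteq> A \<and> fsum f x F = Some s}"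

definition adequate_seq :: "'a set \<Rightarrow> ('a \<Rightarrow> 'a \<Rightarrow> 'a option) \<Rightarrow> (nat \<Rightarrow> 'a) \<Rightarrow> bool" where
  "adequate_seq S f x \<longleftrightarrow>
     (\<forall>n\<ge>1. x n \<in> S) \<and>
     (\<forall>F. finite F \<and> F \<noteq> {} \<and> F \<subseteq> {1..} \<longrightarrow> fsum f x F \<noteq> None) \<and>
     (\<forall>H. finite H \<and> H \<noteq> {} \<and> H \<subseteq> S \<longrightarrow>
        (\<exists>m\<ge>1. FS f x {m..} \<subseteq> sigma S f H))"

definition product_subsystem_fin ::
  "('a \<Rightarrow> 'a \<Rightarrow> 'a option) \<Rightarrow> (nat \<Rightarrow> 'a) \<Rightarrow> nat \<Rightarrow> nat \<Rightarrow> (nat \<Rightarrow> 'a) \<Rightarrow> bool" where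
  "product_subsystem_fin f x k m y \<longleftrightarrow>
     (\<exists>H :: nat \<Rightarrow> nat set.
        (\<forall>n\<in>{1..m}. finite (H n) \<and> H n \<noteq> {}) \<and>
        (1 \<le> m \<longrightarrow> Min (H 1) \<ge> k) \<and>
        (\<forall>n. 1 \<le> n \<and> n < m \<longrightarrow> Max (H n) < Min (H (Suc n))) \<and>
        (\<forall>n\<in>{1..m}. fsum f x (H n) = Some (y n)))"

definition product_subsystem_inf ::
  "('a \<Rightarrow> 'a \<Rightarrow> 'a option) \<Rightarrow> (nat \<Rightarrow> 'a) \<Rightarrow> nat \<Rightarrow> (nat \<Rightarrow> 'a) \<Rightarrow> bool" where
  "product_subsystem_inf f x k y \<longleftrightarrow>
     (\<exists>H :: nat \<Rightarrow> nat set.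
        (\<forall>n\<ge>1. finite (H n) \<and> H n \<noteq> {}) \<and>
        Min (H 1) \<ge> k \<and>
        (\<forall>n\<ge>1. Max (H n) < Min (H (Suc n))) \<and>
        (\<forall>n\<ge>1. fsum f x (H n) = Some (y n)))"

end

theory Submission
  imports Defs
begin

definition filt :: "'b set set \<Rightarrow> bool" where
  "filt F \<longleftrightarrow> UNIV \<in> F \<and> {} \<notin> F \<and> (\<forall>X Y. X \<in> F \<and> X \<subseteq> Y \<longrightarrow> Y \<in> F) \<and> (\<forall>X\<in>F. \<forall>Y\<in>F. X \<inter> Y \<in> F)"

definition ultra :: "'b set set \<Rightarrow> bool" where
  "ultra F \<longleftrightarrow> filt F \<and> (\<forall>X. X \<in> F \<or> -X \<in> F)"

lemma filt_UNIV: "filt F \<Longrightarrow> UNIV \<in> F" by (simp add: filt_def)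
lemma filt_empty: "filt F \<Longrightarrow> {} \<notin> F" by (simp add: filt_def)
lemma filt_up: "filt F \<Longrightarrow> X \<in> F \<Longrightarrow> X \<subseteq> Y \<Longrightarrow> Y \<in> F" unfolding filt_def by blast
lemma filt_Int: "filt F \<Longrightarrow> X \<in> F \<Longrightarrow> Y \<in> F \<Longrightarrow> X \<inter> Y \<in> F" unfolding filt_def by blast
lemma filt_ne: "filt F \<Longrightarrow> X \<in> F \<Longrightarrow> X \<noteq> {}" using filt_empty by blast

lemma ultra_filt: "ultra F \<Longrightarrow> filt F" by (simp add: ultra_def)
lemma ultra_compl: "ultra F \<Longrightarrow> X \<notin> F \<Longrightarrow> -X \<in> F" by (auto simp: ultra_def)
lemma ultra_not_both: "ultra F \<Longrightarrow> X \<in> F \<Longrightarrow> -X \<in> F \<Longrightarrow> False"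
  using filt_Int[of F X "-X"] filt_empty[of F] ultra_filt by auto

lemma ultra_sub_eq: assumes "ultra U" "filt V" "U \<subseteq> V" shows "V = U"
proof
  show "V \<subseteq> U"
  proof
    fix Y assume "Y \<in> V"
    show "Y \<in> U"
    proof (rule ccontr)
      assume "Y \<notin> U"
      then have "-Y \<in> V" using assms ultra_compl by blast
      then have "Y \<inter> -Y \<in> V" using \<open>Y \<in> V\<close> filt_Int assms by blast
      then show False using filt_empty assms by auto
    qed
  qed
qed (use assms in auto)

lemma ultra_Un: assumes "ultra U" "A \<union> B \<in> U" shows "A \<in> U \<or> B \<in> U"
proof (rule ccontr)
  assume "\<not> (A \<in> U \<or> B \<in> U)"
  then have "-A \<in> U" "-B \<in> U" using assms ultra_compl by blast+
  then have "(A \<union> B) \<inter> (-A \<inter> -B) \<in> U" using assms filt_Int ultra_filt by metis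
  then show False using filt_empty assms ultra_filt by (metis Int_Un_distrib2 Int_absorb2 Un_Int_eq(2) Un_empty_left boolean_algebra.conj_zero_right compl_sup inf_commute inf_compl_bot_right)
qed

definition addset :: "'b set set \<Rightarrow> 'b set \<Rightarrow> 'b set set" where
  "addset F A = {Z. \<exists>W\<in>F. W \<inter> A \<subseteq> Z}"

lemma addset_filt: assumes "filt F" "\<forall>W\<in>F. W \<inter> A \<noteq> {}" shows "filt (addset F A)"
  unfolding filt_def addset_def
proof (intro conjI allI ballI impI)
  show "UNIV \<in> {Z. \<exists>W\<in>F. W \<inter> A \<subseteq> Z}" using assms filt_UNIV by blast
  show "{} \<notin> {Z. \<exists>W\<in>F. W \<inter> A \<subseteq> Z}" using assms by blast
  fix X Y assume "X \<in> {Z. \<exists>W\<in>F. W \<inter> A \<subseteq> Z} \<and> X \<subseteq> Y"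
  then show "Y \<in> {Z. \<exists>W\<in>F. W \<inter> A \<subseteq> Z}" by blast
next
  fix X Y assume "X \<in> {Z. \<exists>W\<in>F. W \<inter> A \<subseteq> Z}" "Y \<in> {Z. \<exists>W\<in>F. W \<inter> A \<subseteq> Z}"
  then obtain W1 W2 where "W1 \<in> F" "W2 \<in> F" "W1 \<inter> A \<subseteq> X" "W2 \<inter> A \<subseteq> Y" by blast
  then show "X \<inter> Y \<in> {Z. \<exists>W\<in>F. W \<inter> A \<subseteq> Z}"
    using filt_Int[OF assms(1), of W1 W2] by blast
qed

lemma ultra_exists: assumes "filt F" shows "\<exists>U. ultra U \<and> F \<subseteq> U"
proof -
  let ?A = "{G. filt G \<and> F \<subseteq> G}"
  have "\<exists>M\<in>?A. \<forall>X\<in>?A. M \<subseteq> X \<longrightarrow> X = M"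
  proof (rule Zorn_Lemma2, intro ballI)
    fix C assume C: "C \<in> chains ?A"
    show "\<exists>U\<in>?A. \<forall>X\<in>C. X \<subseteq> U"
    proof (cases "C = {}")
      case True then show ?thesis using assms by auto
    next
      case False
      have sub: "C \<subseteq> ?A" and ch: "\<forall>X\<in>C. \<forall>Y\<in>C. X \<subseteq> Y \<or> Y \<subseteq> X"
        using C unfolding chains_def chain_subset_def by auto
      have "filt (\<Union>C)" unfolding filt_def
      proof (intro conjI allI ballI impI)
        show "UNIV \<in> \<Union>C" using False sub filt_UNIV by blast
        show "{} \<notin> \<Union>C" using sub filt_empty by blast
        fix X Y assume "X \<in> \<Union>C \<and> X \<subseteq> Y" then show "Y \<in> \<Union>C" using sub filt_up by blast
      next
        fix X Y assume "X \<in> \<Union>C" "Y \<in> \<Union>C"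
        then obtain G1 G2 where "G1 \<in> C" "G2 \<in> C" "X \<in> G1" "Y \<in> G2" by blast
        then show "X \<inter> Y \<in> \<Union>C" using ch sub filt_Int
          by (metis (no_types, lifting) UnionI mem_Collect_eq subset_iff)
      qed
      then show ?thesis using False sub by blast
    qed
  qed
  then obtain M where M: "filt M" "F \<subseteq> M" and max: "\<forall>X\<in>?A. M \<subseteq> X \<longrightarrow> X = M" by blast
  have "ultra M" unfolding ultra_def
  proof (intro conjI allI M(1))
    fix X show "X \<in> M \<or> -X \<in> M"
    proof (rule ccontr)
      assume nx: "\<not> (X \<in> M \<or> -X \<in> M)"
      have "\<forall>W\<in>M. W \<inter> X \<noteq> {}"
      proof
        fix W assume "W \<in> M"
        show "W \<inter> X \<noteq> {}"
        proof
          assume "W \<inter> X = {}" then have "W \<subseteq> -X" by blast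
          then show False using nx filt_up M \<open>W \<in> M\<close> by blast
        qed
      qed
      then have f: "filt (addset M X)" using addset_filt M by blast
      have "M \<subseteq> addset M X" unfolding addset_def by blast
      then have "addset M X = M" using max f M by blast
      moreover have "X \<in> addset M X" unfolding addset_def using M filt_UNIV by blast
      ultimately show False using nx by blast
    qed
  qed
  then show ?thesis using M by blast
qed

lemma filt_mem_all_ultra:
  assumes "filt F" "\<And>U. ultra U \<Longrightarrow> F \<subseteq> U \<Longrightarrow> Y \<in> U" shows "Y \<in> F"
proof (rule ccontr)
  assume nY: "Y \<notin> F"
  have "\<forall>W\<in>F. W \<inter> -Y \<noteq> {}"
  proof
    fix W assume "W \<in> F"
    show "W \<inter> -Y \<noteq> {}"
    proof
      assume "W \<inter> -Y = {}" then have "W \<subseteq> Y" by blast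
      then show False using nY filt_up assms \<open>W \<in> F\<close> by blast
    qed
  qed
  then have "filt (addset F (-Y))" using addset_filt assms by blast
  then obtain U where U: "ultra U" "addset F (-Y) \<subseteq> U" using ultra_exists by blast
  have "F \<subseteq> addset F (-Y)" unfolding addset_def by blast
  then have "Y \<in> U" using assms U by blast
  moreover have "-Y \<in> U" using U assms filt_UNIV unfolding addset_def by blast
  ultimately show False using ultra_not_both U by blast
qed

lemma filt_finite_Inter:
  assumes "filt p" "finite I" "\<forall>i\<in>I. A i \<in> p" shows "(\<Inter>i\<in>I. A i) \<in> p"
  using assms(2,3)
proof (induction I rule: finite_induct)
  case empty then show ?case using assms filt_UNIV by simp
next
  case (insert a I) then show ?case using filt_Int[OF assms(1)] by simp
qed


declare Max_less_iff[simp del] Min_gr_iff[simp del] Max_le_iff[simp del] Min_ge_iff[simp del]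

definition Fin :: "nat set set" where "Fin = {a. finite a \<and> a \<noteq> {}}"
definition Big :: "nat \<Rightarrow> nat set set" where "Big n = {a. finite a \<and> a \<noteq> {} \<and> n < Min a}"
definition shift :: "nat set set \<Rightarrow> nat set \<Rightarrow> nat set set" where
  "shift X a = {b. a \<in> Fin \<and> b \<in> Fin \<and> Max a < Min b \<and> a \<union> b \<in> X}"
definition pl :: "nat set set set \<Rightarrow> nat set set set \<Rightarrow> nat set set set" where
  "pl p q = {X. {a. shift X a \<in> q} \<in> p}"
definition delta :: "nat set set set \<Rightarrow> bool" where
  "delta p \<longleftrightarrow> ultra p \<and> (\<forall>n. Big n \<in> p)"

lemma Big_Fin: "Big n \<subseteq> Fin" unfolding Big_def Fin_def by auto

lemma shift_mono: "X \<subseteq> Y \<Longrightarrow> shift X a \<subseteq> shift Y a" unfolding shift_def by auto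
lemma shift_Int: "shift (X \<inter> Y) a = shift X a \<inter> shift Y a" unfolding shift_def by auto
lemma shift_empty: "shift {} a = {}" unfolding shift_def by auto
lemma shift_compl: "a \<in> Fin \<Longrightarrow> shift (-X) a = Big (Max a) - shift X a"
  unfolding shift_def Big_def Fin_def by auto
lemma shift_UNIV: "a \<in> Fin \<Longrightarrow> shift UNIV a = Big (Max a)"
  unfolding shift_def Big_def Fin_def by auto

lemma delta_ultra: "delta p \<Longrightarrow> ultra p" by (simp add: delta_def)
lemma delta_filt: "delta p \<Longrightarrow> filt p" by (simp add: delta_def ultra_filt)
lemma delta_Big: "delta p \<Longrightarrow> Big n \<in> p" by (simp add: delta_def)
lemma delta_Fin: "delta p \<Longrightarrow> Fin \<in> p" using delta_Big Big_Fin delta_filt filt_up by metis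

lemma delta_shift_compl:
  assumes "delta q" "a \<in> Fin" "shift X a \<notin> q" shows "shift (-X) a \<in> q"
proof -
  have "-(shift X a) \<in> q" using assms delta_ultra ultra_compl by blast
  then have "Big (Max a) \<inter> -(shift X a) \<in> q" using assms delta_Big delta_filt filt_Int by blast
  then show ?thesis using shift_compl[OF assms(2)] by (simp add: Diff_eq)
qed

lemma T_Int: assumes "filt q"
  shows "{a. shift X a \<in> q} \<inter> {a. shift Y a \<in> q} = {a. shift (X \<inter> Y) a \<in> q}"
proof (intro set_eqI iffI)
  fix a assume "a \<in> {a. shift X a \<in> q} \<inter> {a. shift Y a \<in> q}"
  then show "a \<in> {a. shift (X \<inter> Y) a \<in> q}" using filt_Int[OF assms] shift_Int by auto
next
  fix a assume "a \<in> {a. shift (X \<inter> Y) a \<in> q}"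
  then show "a \<in> {a. shift X a \<in> q} \<inter> {a. shift Y a \<in> q}"
    using filt_up[OF assms] shift_Int by (metis Int_iff inf_le1 inf_le2 mem_Collect_eq)
qed

lemma pl_delta: assumes p: "delta p" and q: "delta q" shows "delta (pl p q)"
proof -
  have fp: "filt p" and fq: "filt q" using p q delta_filt by auto
  have "filt (pl p q)" unfolding filt_def pl_def
  proof (intro conjI allI ballI impI)
    have "Fin \<subseteq> {a. shift UNIV a \<in> q}" using shift_UNIV delta_Big q by auto
    then show "UNIV \<in> {X. {a. shift X a \<in> q} \<in> p}" using delta_Fin p fp filt_up by blast
    have "{a. shift {} a \<in> q} = {}" using shift_empty filt_empty[OF fq] by simp
    then show "{} \<notin> {X. {a. shift X a \<in> q} \<in> p}" using filt_empty[OF fp] by simp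
    fix X Y assume "X \<in> {X. {a. shift X a \<in> q} \<in> p} \<and> X \<subseteq> Y"
    then show "Y \<in> {X. {a. shift X a \<in> q} \<in> p}"
      using shift_mono filt_up[OF fq] filt_up[OF fp] by (smt (verit, del_insts) mem_Collect_eq subsetI)
  next
    fix X Y assume "X \<in> {X. {a. shift X a \<in> q} \<in> p}" "Y \<in> {X. {a. shift X a \<in> q} \<in> p}"
    then have "{a. shift X a \<in> q} \<inter> {a. shift Y a \<in> q} \<in> p" using filt_Int fp by blast
    moreover have "{a. shift X a \<in> q} \<inter> {a. shift Y a \<in> q} = {a. shift (X \<inter> Y) a \<in> q}"
      using T_Int[OF fq] by simp
    ultimately show "X \<inter> Y \<in> {X. {a. shift X a \<in> q} \<in> p}" by simp
  qed
  moreover have "\<forall>X. X \<in> pl p q \<or> -X \<in> pl p q"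
  proof
    fix X
    have "Fin \<subseteq> {a. shift X a \<in> q} \<union> {a. shift (-X) a \<in> q}" using delta_shift_compl q by blast
    then have "{a. shift X a \<in> q} \<union> {a. shift (-X) a \<in> q} \<in> p" using delta_Fin p fp filt_up by blast
    then show "X \<in> pl p q \<or> -X \<in> pl p q" unfolding pl_def using ultra_Un delta_ultra p by blast
  qed
  moreover have "\<forall>n. Big n \<in> pl p q"
  proof
    fix n
    have "Big n \<subseteq> {a. shift (Big n) a \<in> q}"
    proof
      fix a assume a: "a \<in> Big n"
      have "Big (Max a) \<subseteq> shift (Big n) a"
      proof
        fix b assume b: "b \<in> Big (Max a)"
        have fa: "finite a" "a \<noteq> {}" "n < Min a" and fb: "finite b" "b \<noteq> {}" "Max a < Min b"
          using a b unfolding Big_def by auto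
        have "Min (a \<union> b) = min (Min a) (Min b)" using fa fb by (intro Min_Un) auto
        moreover have "Min a \<le> Max a" using fa by simp
        ultimately have "n < Min (a \<union> b)" using fa fb by linarith
        then show "b \<in> shift (Big n) a" using a b unfolding shift_def Big_def Fin_def by auto
      qed
      then show "a \<in> {a. shift (Big n) a \<in> q}" using q delta_Big fq filt_up by blast
    qed
    then show "Big n \<in> pl p q" unfolding pl_def using p delta_Big fp filt_up by blast
  qed
  ultimately show ?thesis unfolding delta_def ultra_def by blast
qed

lemma shift_shift:
  assumes "{} \<notin> s"
  shows "shift {a. shift X a \<in> s} c = {a. shift (shift X c) a \<in> s}"
proof (intro set_eqI iffI)
  fix a assume "a \<in> shift {a. shift X a \<in> s} c"
  then have c: "c \<in> Fin" "a \<in> Fin" "Max c < Min a" "shift X (c \<union> a) \<in> s" unfolding shift_def by auto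
  have "shift (shift X c) a = shift X (c \<union> a)"
  proof (intro set_eqI iffI)
    fix b assume b: "b \<in> shift (shift X c) a"
    then have b1: "b \<in> Fin" "Max a < Min b" "Max c < Min (a \<union> b)" "c \<union> (a \<union> b) \<in> X"
      unfolding shift_def by auto
    have "Min (a \<union> b) \<le> Min b" using b1 c unfolding Fin_def by (intro Min_antimono) auto
    moreover have "Max (c \<union> a) = max (Max c) (Max a)" using c unfolding Fin_def by (intro Max_Un) auto
    ultimately have "Max (c \<union> a) < Min b" using b1 by linarith
    then show "b \<in> shift X (c \<union> a)" using c b1 unfolding shift_def Fin_def
      by (auto simp: Un_assoc)
  next
    fix b assume b: "b \<in> shift X (c \<union> a)"
    then have "Max (c \<union> a) < Min b" "b \<in> Fin" unfolding shift_def by auto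
    moreover have "Max (c \<union> a) = max (Max c) (Max a)" using c unfolding Fin_def by (intro Max_Un) auto
    ultimately have "Max a < Min b" "Max c < Min b" by linarith+
    moreover have "Min (a \<union> b) = min (Min a) (Min b)" using c \<open>b \<in> Fin\<close> unfolding Fin_def by (intro Min_Un) auto
    ultimately have "Max c < Min (a \<union> b)" using c by simp
    then show "b \<in> shift (shift X c) a" using c b unfolding shift_def Fin_def
      by (auto simp: Max_Un Un_assoc)
  qed
  then show "a \<in> {a. shift (shift X c) a \<in> s}" using c by simp
next
  fix a assume a: "a \<in> {a. shift (shift X c) a \<in> s}"
  then have ne: "shift (shift X c) a \<noteq> {}" using assms by auto
  then obtain b where b: "b \<in> shift (shift X c) a" by blast
  then have c: "c \<in> Fin" "a \<in> Fin" "Max c < Min (a \<union> b)" "Max a < Min b" "b \<in> Fin"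
    unfolding shift_def Fin_def by auto
  then have mc: "Max c < Min a" using c unfolding Fin_def by (auto simp: Min_Un)
  have "shift (shift X c) a = shift X (c \<union> a)"
  proof (intro set_eqI iffI)
    fix b assume b: "b \<in> shift (shift X c) a"
    then have b1: "b \<in> Fin" "Max a < Min b" "Max c < Min (a \<union> b)" "c \<union> (a \<union> b) \<in> X"
      unfolding shift_def by auto
    have "Min (a \<union> b) \<le> Min b" using b1 c unfolding Fin_def by (intro Min_antimono) auto
    moreover have "Max (c \<union> a) = max (Max c) (Max a)" using c unfolding Fin_def by (intro Max_Un) auto
    ultimately have "Max (c \<union> a) < Min b" using b1 by linarith
    then show "b \<in> shift X (c \<union> a)" using c b1 unfolding shift_def Fin_def
      by (auto simp: Un_assoc)
  next
    fix b assume b: "b \<in> shift X (c \<union> a)"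
    then have "Max (c \<union> a) < Min b" "b \<in> Fin" unfolding shift_def by auto
    moreover have "Max (c \<union> a) = max (Max c) (Max a)" using c unfolding Fin_def by (intro Max_Un) auto
    ultimately have "Max a < Min b" "Max c < Min b" by linarith+
    moreover have "Min (a \<union> b) = min (Min a) (Min b)" using c \<open>b \<in> Fin\<close> unfolding Fin_def by (intro Min_Un) auto
    ultimately have "Max c < Min (a \<union> b)" using mc by simp
    then show "b \<in> shift (shift X c) a" using c b unfolding shift_def Fin_def
      by (auto simp: Max_Un Un_assoc)
  qed
  then show "a \<in> shift {a. shift X a \<in> s} c" using a c mc unfolding shift_def by auto
qed

lemma pl_assoc: assumes "{} \<notin> s" shows "pl (pl p q) s = pl p (pl q s)"
  unfolding pl_def using shift_shift[OF assms] by simp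


definition F0 :: "nat set set set" where "F0 = {Z. \<exists>n. Big n \<subseteq> Z}"

definition Tm :: "nat set set set \<Rightarrow> nat set set \<Rightarrow> nat set set" where
  "Tm p X = {a. shift X a \<in> p}"

lemma pl_Tm: "X \<in> pl q p \<longleftrightarrow> Tm p X \<in> q" by (simp add: pl_def Tm_def)

lemma Tm_Int: "filt p \<Longrightarrow> Tm p (X \<inter> Y) = Tm p X \<inter> Tm p Y"
  unfolding Tm_def using T_Int[of p X Y] by simp

lemma Tm_mono: assumes "filt p" "X \<subseteq> Y" shows "Tm p X \<subseteq> Tm p Y"
proof
  fix a assume "a \<in> Tm p X"
  then have "shift X a \<in> p" unfolding Tm_def by simp
  then have "shift Y a \<in> p" using filt_up[OF assms(1)] shift_mono[OF assms(2)] by blast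
  then show "a \<in> Tm p Y" unfolding Tm_def by simp
qed

lemma Big_mono: "m \<le> n \<Longrightarrow> Big n \<subseteq> Big m" unfolding Big_def by auto

lemma Big_ne: "Big n \<noteq> {}"
proof -
  have "{Suc n} \<in> Big n" unfolding Big_def by auto
  then show ?thesis by blast
qed

lemma filt_F0: "filt F0" unfolding filt_def F0_def
proof (intro conjI allI ballI impI)
  show "UNIV \<in> {Z. \<exists>n. Big n \<subseteq> Z}" by blast
  show "{} \<notin> {Z. \<exists>n. Big n \<subseteq> Z}" using Big_ne by blast
  fix X Y assume "X \<in> {Z. \<exists>n. Big n \<subseteq> Z} \<and> X \<subseteq> Y" then show "Y \<in> {Z. \<exists>n. Big n \<subseteq> Z}" by blast
next
  fix X Y assume "X \<in> {Z. \<exists>n. Big n \<subseteq> Z}" "Y \<in> {Z. \<exists>n. Big n \<subseteq> Z}"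
  then obtain m n where "Big m \<subseteq> X" "Big n \<subseteq> Y" by blast
  then have "Big (max m n) \<subseteq> X \<inter> Y" using Big_mono[of m "max m n"] Big_mono[of n "max m n"] by auto
  then show "X \<inter> Y \<in> {Z. \<exists>n. Big n \<subseteq> Z}" by blast
qed

lemma Big_F0: "Big n \<in> F0" unfolding F0_def by blast

lemma delta_F0: "ultra p \<Longrightarrow> F0 \<subseteq> p \<Longrightarrow> delta p"
  unfolding delta_def using Big_F0 by blast

lemma F0_delta: assumes "delta p" shows "F0 \<subseteq> p"
proof
  fix Z assume "Z \<in> F0"
  then obtain n where "Big n \<subseteq> Z" unfolding F0_def by blast
  then show "Z \<in> p" using delta_Big[OF assms, of n] delta_filt[OF assms] filt_up by blast
qed

lemma Fin_F0: "Fin \<in> F0" unfolding F0_def using Big_Fin by blast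

definition semi :: "nat set set set \<Rightarrow> bool" where
  "semi F \<longleftrightarrow> filt F \<and> F0 \<subseteq> F \<and>
     (\<forall>q1 q2. ultra q1 \<and> F \<subseteq> q1 \<and> ultra q2 \<and> F \<subseteq> q2 \<longrightarrow> F \<subseteq> pl q1 q2)"

lemma ext_lemma:
  assumes M: "filt M" "F0 \<subseteq> M" and p: "delta p" and r: "ultra r"
    and h: "\<And>X. Tm p X \<in> M \<Longrightarrow> X \<in> r"
  shows "\<exists>q. ultra q \<and> M \<subseteq> q \<and> (\<forall>X\<in>r. Tm p X \<in> q) \<and> pl q p = r"
proof -
  have fp: "filt p" using p delta_filt by blast
  have fr: "filt r" using r ultra_filt by blast
  define G where "G = {Z. \<exists>W\<in>M. \<exists>X\<in>r. W \<inter> Tm p X \<subseteq> Z}"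
  have "filt G" unfolding filt_def
  proof (intro conjI allI ballI impI)
    show "UNIV \<in> G" unfolding G_def using M filt_UNIV fr by blast
    show "{} \<notin> G"
    proof
      assume "{} \<in> G"
      then obtain W X where W: "W \<in> M" "X \<in> r" "W \<inter> Tm p X = {}" unfolding G_def by blast
      have "W \<inter> Fin \<subseteq> Tm p (-X)"
      proof
        fix a assume a: "a \<in> W \<inter> Fin"
        then have "shift X a \<notin> p" using W unfolding Tm_def by blast
        then show "a \<in> Tm p (-X)" using delta_shift_compl[OF p] a unfolding Tm_def by blast
      qed
      moreover have "W \<inter> Fin \<in> M" using W M Fin_F0 filt_Int by blast
      ultimately have "Tm p (-X) \<in> M" using M filt_up by blast
      then have "-X \<in> r" using h by blast
      then show False using W r ultra_not_both by blast
    qed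
    fix X Y assume "X \<in> G \<and> X \<subseteq> Y" then show "Y \<in> G" unfolding G_def by blast
  next
    fix X Y assume "X \<in> G" "Y \<in> G"
    then obtain W1 X1 W2 X2 where "W1 \<in> M" "X1 \<in> r" "W1 \<inter> Tm p X1 \<subseteq> X"
      "W2 \<in> M" "X2 \<in> r" "W2 \<inter> Tm p X2 \<subseteq> Y" unfolding G_def by blast
    moreover have "Tm p (X1 \<inter> X2) = Tm p X1 \<inter> Tm p X2" using Tm_Int fp by blast
    ultimately have "(W1 \<inter> W2) \<inter> Tm p (X1 \<inter> X2) \<subseteq> X \<inter> Y" "W1 \<inter> W2 \<in> M" "X1 \<inter> X2 \<in> r"
      using filt_Int[OF M(1)] filt_Int[OF fr] by auto
    then show "X \<inter> Y \<in> G" unfolding G_def by blast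
  qed
  then obtain q where q: "ultra q" "G \<subseteq> q" using ultra_exists by blast
  have MG: "M \<subseteq> G" unfolding G_def using fr filt_UNIV by blast
  have rq: "\<forall>X\<in>r. Tm p X \<in> q" using q M filt_UNIV unfolding G_def by blast
  have dq: "delta q" using delta_F0 q MG M by blast
  have "pl q p = r"
  proof (rule ultra_sub_eq[OF r])
    show "filt (pl q p)" using pl_delta[OF dq p] delta_filt by blast
    show "r \<subseteq> pl q p" using rq pl_Tm by blast
  qed
  then show ?thesis using q MG rq by blast
qed

lemma semi_F0: "semi F0"
  unfolding semi_def using filt_F0 delta_F0 pl_delta F0_delta by blast

lemma idem_exists: "\<exists>p. delta p \<and> pl p p = p"
proof -
  let ?A = "{F. semi F}"
  have "\<exists>M\<in>?A. \<forall>X\<in>?A. M \<subseteq> X \<longrightarrow> X = M"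
  proof (rule Zorn_Lemma2, intro ballI)
    fix C assume C: "C \<in> chains ?A"
    show "\<exists>U\<in>?A. \<forall>X\<in>C. X \<subseteq> U"
    proof (cases "C = {}")
      case True then show ?thesis using semi_F0 by auto
    next
      case False
      have sub: "\<And>F. F \<in> C \<Longrightarrow> semi F" and ch: "\<forall>X\<in>C. \<forall>Y\<in>C. X \<subseteq> Y \<or> Y \<subseteq> X"
        using C unfolding chains_def chain_subset_def by auto
      have sf: "\<And>F. F \<in> C \<Longrightarrow> filt F" using sub semi_def by blast
      have "filt (\<Union>C)" unfolding filt_def
      proof (intro conjI allI ballI impI)
        show "UNIV \<in> \<Union>C" using False sf filt_UNIV by blast
        show "{} \<notin> \<Union>C" using sf filt_empty by blast
        fix X Y assume "X \<in> \<Union>C \<and> X \<subseteq> Y" then show "Y \<in> \<Union>C" using sf filt_up by blast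
      next
        fix X Y assume "X \<in> \<Union>C" "Y \<in> \<Union>C"
        then obtain G1 G2 where "G1 \<in> C" "G2 \<in> C" "X \<in> G1" "Y \<in> G2" by blast
        then show "X \<inter> Y \<in> \<Union>C" using ch sf filt_Int
          by (metis (no_types, lifting) UnionI subset_iff)
      qed
      moreover have "F0 \<subseteq> \<Union>C" using False sub semi_def by blast
      moreover have "\<forall>q1 q2. ultra q1 \<and> \<Union>C \<subseteq> q1 \<and> ultra q2 \<and> \<Union>C \<subseteq> q2 \<longrightarrow> \<Union>C \<subseteq> pl q1 q2"
      proof (intro allI impI)
        fix q1 q2 assume "ultra q1 \<and> \<Union>C \<subseteq> q1 \<and> ultra q2 \<and> \<Union>C \<subseteq> q2"
        then show "\<Union>C \<subseteq> pl q1 q2" using sub unfolding semi_def by (meson Sup_le_iff le_supI1 sup.absorb_iff2)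
      qed
      ultimately show ?thesis unfolding semi_def by blast
    qed
  qed
  then obtain M where sM: "semi M" and max: "\<And>X. semi X \<Longrightarrow> M \<subseteq> X \<Longrightarrow> X = M" by blast
  have fM: "filt M" and M0: "F0 \<subseteq> M" and sg: "\<And>q1 q2. ultra q1 \<Longrightarrow> M \<subseteq> q1 \<Longrightarrow> ultra q2 \<Longrightarrow> M \<subseteq> q2 \<Longrightarrow> M \<subseteq> pl q1 q2"
    using sM unfolding semi_def by blast+
  obtain p where p: "ultra p" "M \<subseteq> p" using ultra_exists fM by blast
  have dp: "delta p" using delta_F0 p M0 by blast
  have fp: "filt p" using p ultra_filt by blast
  define G where "G = {X. Tm p X \<in> M}"
  have MG: "M \<subseteq> G"
  proof
    fix X assume X: "X \<in> M"
    have "Tm p X \<in> M"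
    proof (rule filt_mem_all_ultra[OF fM])
      fix U assume "ultra U" "M \<subseteq> U"
      then have "M \<subseteq> pl U p" using sg p by blast
      then show "Tm p X \<in> U" using X pl_Tm by blast
    qed
    then show "X \<in> G" unfolding G_def by blast
  qed
  have "semi G" unfolding semi_def
  proof (intro conjI allI impI)
    show "filt G" unfolding filt_def
    proof (intro conjI allI ballI impI)
      show "UNIV \<in> G" using MG fM filt_UNIV by blast
      have "Tm p {} = {}" unfolding Tm_def shift_empty using filt_empty[OF fp] by simp
      then show "{} \<notin> G" unfolding G_def using filt_empty[OF fM] by simp
      fix X Y assume XY: "X \<in> G \<and> X \<subseteq> Y"
      then have "Tm p X \<in> M" unfolding G_def by simp
      moreover have "Tm p X \<subseteq> Tm p Y" using Tm_mono[OF fp] XY by simp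
      ultimately show "Y \<in> G" unfolding G_def using filt_up[OF fM] by simp
    next
      fix X Y assume "X \<in> G" "Y \<in> G" then show "X \<inter> Y \<in> G" unfolding G_def using Tm_Int[OF fp] filt_Int[OF fM] by simp
    qed
    show "F0 \<subseteq> G" using M0 MG by blast
    fix q1 q2 assume q: "ultra q1 \<and> G \<subseteq> q1 \<and> ultra q2 \<and> G \<subseteq> q2"
    obtain s1 where s1: "ultra s1" "M \<subseteq> s1" "pl s1 p = q1"
      using ext_lemma[OF fM M0 dp, of q1] q unfolding G_def by blast
    obtain s2 where s2: "ultra s2" "M \<subseteq> s2" "pl s2 p = q2"
      using ext_lemma[OF fM M0 dp, of q2] q unfolding G_def by blast
    have ds1: "delta s1" "delta s2" using s1 s2 M0 delta_F0 by blast+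
    have d1: "delta (pl s1 p)" using pl_delta ds1 dp by blast
    have M1: "M \<subseteq> pl s1 p" using sg s1 p by blast
    define s' where "s' = pl (pl s1 p) s2"
    have ds': "delta s'" unfolding s'_def using pl_delta d1 ds1 by blast
    have Ms': "M \<subseteq> s'" unfolding s'_def using sg M1 d1 delta_ultra s2 by blast
    have "pl q1 q2 = pl s' p"
      unfolding s'_def using s1(3) s2(3) pl_assoc[of p "pl s1 p" s2] filt_empty[OF fp] by simp
    moreover have "G \<subseteq> pl s' p" unfolding G_def using Ms' pl_Tm by blast
    ultimately show "G \<subseteq> pl q1 q2" by simp
  qed
  then have GM: "G = M" using max MG by blast
  obtain q where q: "ultra q" "M \<subseteq> q" "\<forall>X\<in>p. Tm p X \<in> q"
    using ext_lemma[OF fM M0 dp p(1)] p GM unfolding G_def by blast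
  define F' where "F' = {Z. \<exists>W\<in>M. \<exists>X\<in>p. W \<inter> Tm p X \<subseteq> Z}"
  have MF': "M \<subseteq> F'" unfolding F'_def using fp filt_UNIV by blast
  have "semi F'" unfolding semi_def
  proof (intro conjI allI impI)
    show "filt F'" unfolding filt_def
    proof (intro conjI allI ballI impI)
      show "UNIV \<in> F'" using MF' fM filt_UNIV by blast
      show "{} \<notin> F'"
      proof
        assume "{} \<in> F'"
        then obtain W X where WX: "W \<in> M" "X \<in> p" "W \<inter> Tm p X = {}" unfolding F'_def by blast
        then have "W \<in> q" "Tm p X \<in> q" using q by auto
        then have "W \<inter> Tm p X \<in> q" using filt_Int ultra_filt q(1) by blast
        then have "{} \<in> q" using WX by simp
        then show False using q ultra_filt filt_empty by blast
      qed
      fix X Y assume "X \<in> F' \<and> X \<subseteq> Y" then show "Y \<in> F'" unfolding F'_def by blast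
    next
      fix X Y assume "X \<in> F'" "Y \<in> F'"
      then obtain W1 X1 W2 X2 where "W1 \<in> M" "X1 \<in> p" "W1 \<inter> Tm p X1 \<subseteq> X"
        "W2 \<in> M" "X2 \<in> p" "W2 \<inter> Tm p X2 \<subseteq> Y" unfolding F'_def by blast
      moreover have "Tm p (X1 \<inter> X2) = Tm p X1 \<inter> Tm p X2" using Tm_Int fp by blast
      ultimately have "(W1 \<inter> W2) \<inter> Tm p (X1 \<inter> X2) \<subseteq> X \<inter> Y" "W1 \<inter> W2 \<in> M" "X1 \<inter> X2 \<in> p"
        using filt_Int[OF fM] filt_Int[OF fp] by auto
      then show "X \<inter> Y \<in> F'" unfolding F'_def by blast
    qed
    show "F0 \<subseteq> F'" using M0 MF' by blast
    fix q1 q2 assume qq: "ultra q1 \<and> F' \<subseteq> q1 \<and> ultra q2 \<and> F' \<subseteq> q2"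
    have Mq: "M \<subseteq> q1" "M \<subseteq> q2" using qq MF' by auto
    have dq: "delta q1" "delta q2" using Mq qq M0 delta_F0[of q1] delta_F0[of q2] by auto
    have pq: "pl q1 p = p" "pl q2 p = p"
    proof -
      have "\<And>qi. ultra qi \<Longrightarrow> F' \<subseteq> qi \<Longrightarrow> delta qi \<Longrightarrow> pl qi p = p"
      proof -
        fix qi assume qi: "ultra qi" "F' \<subseteq> qi" "delta qi"
        have "p \<subseteq> pl qi p"
        proof
          fix X assume "X \<in> p"
          then have "UNIV \<inter> Tm p X \<subseteq> Tm p X" "UNIV \<in> M" using filt_UNIV[OF fM] by auto
          then have "Tm p X \<in> F'" unfolding F'_def using \<open>X \<in> p\<close> by blast
          then have "Tm p X \<in> qi" using qi by blast
          then show "X \<in> pl qi p" using pl_Tm by blast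
        qed
        moreover have "filt (pl qi p)" using pl_delta[OF qi(3) dp] delta_filt by blast
        ultimately show "pl qi p = p" using ultra_sub_eq[OF p(1)] by blast
      qed
      then show "pl q1 p = p" "pl q2 p = p" using qq dq by auto
    qed
    show "F' \<subseteq> pl q1 q2"
    proof
      fix Z assume "Z \<in> F'"
      then obtain W X where WX: "W \<in> M" "X \<in> p" "W \<inter> Tm p X \<subseteq> Z" unfolding F'_def by blast
      have "W \<in> pl q1 q2" using sg qq Mq WX by blast
      moreover have "X \<in> pl (pl q1 q2) p"
        using pl_assoc[where p=q1 and q=q2 and s=p, OF filt_empty[OF fp]] pq WX by simp
      then have "Tm p X \<in> pl q1 q2" using pl_Tm by blast
      moreover have "filt (pl q1 q2)" using pl_delta dq delta_filt by blast
      ultimately have "W \<inter> Tm p X \<in> pl q1 q2" using filt_Int by blast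
      then show "Z \<in> pl q1 q2" using WX filt_up \<open>filt (pl q1 q2)\<close> by blast
    qed
  qed
  then have "F' = M" using max MF' by blast
  then have "p \<subseteq> pl p p"
    using p(2) unfolding F'_def using pl_Tm fM filt_UNIV by blast
  then have "pl p p = p" using ultra_sub_eq[OF p(1)] pl_delta[OF dp dp] delta_filt by blast
  then show ?thesis using dp by blast
qed


definition star :: "nat set set set \<Rightarrow> nat set set \<Rightarrow> nat set set" where
  "star p Y = {a \<in> Y. shift Y a \<in> p}"

lemma star_eq: "star p Y = Y \<inter> Tm p Y" unfolding star_def Tm_def by auto

lemma star_in: assumes "delta p" "pl p p = p" "Y \<in> p" shows "star p Y \<in> p"
proof -
  have "Tm p Y \<in> p" using assms pl_Tm by metis
  then show ?thesis unfolding star_eq using filt_Int delta_filt assms by blast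
qed

lemma star_shift: assumes p: "delta p" "pl p p = p" and a: "a \<in> star p Y"
  shows "shift (star p Y) a \<in> p"
proof -
  have fp: "filt p" using p delta_filt by blast
  have s: "shift Y a \<in> p" using a unfolding star_def by simp
  then have t: "Tm p (shift Y a) \<in> p" using p pl_Tm by metis
  have "Tm p (shift Y a) = shift (Tm p Y) a"
    unfolding Tm_def using shift_shift[of p Y a] filt_empty[OF fp] by simp
  then have "shift (star p Y) a = shift Y a \<inter> Tm p (shift Y a)"
    unfolding star_eq shift_Int by simp
  then show ?thesis using s t filt_Int[OF fp] by simp
qed

definition okf :: "nat set set \<Rightarrow> (nat \<Rightarrow> nat set) \<Rightarrow> nat \<Rightarrow> bool" where
  "okf Y A n \<longleftrightarrow> (\<forall>i<n. A i \<in> Fin) \<and> (\<forall>i. Suc i < n \<longrightarrow> Max (A i) < Min (A (Suc i))) \<and>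
     (\<forall>F. F \<noteq> {} \<and> F \<subseteq> {..<n} \<longrightarrow> (\<Union>i\<in>F. A i) \<in> Y)"

lemma okf_cong: assumes "\<forall>i<n. A i = B i" shows "okf Y A n = okf Y B n"
proof -
  have "\<And>F. F \<subseteq> {..<n} \<Longrightarrow> (\<Union>i\<in>F. A i) = (\<Union>i\<in>F. B i)" using assms by auto
  moreover have "\<And>i. Suc i < n \<Longrightarrow> A i = B i \<and> A (Suc i) = B (Suc i)" using assms by auto
  ultimately show ?thesis unfolding okf_def using assms by (smt (verit))
qed

lemma okf_0: "okf Y A 0" unfolding okf_def by auto

lemma okf_step:
  assumes dp: "delta p" and Y: "Y \<in> p" "\<forall>a\<in>Y. shift Y a \<in> p" "Y \<subseteq> Fin" and ok: "okf Y A n"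
  shows "\<exists>a. okf Y (A(n:=a)) (Suc n)"
proof -
  have fp: "filt p" using dp delta_filt by blast
  define U where "U = (\<lambda>F. \<Union>i\<in>F. A i) ` {F. F \<noteq> {} \<and> F \<subseteq> {..<n}}"
  have fU: "finite U" unfolding U_def by (rule finite_imageI) (rule finite_subset[of _ "Pow {..<n}"], auto)
  have UY: "U \<subseteq> Y" using ok unfolding U_def okf_def by blast
  define C where "C = Y \<inter> (\<Inter>s\<in>U. shift Y s) \<inter> (if n = 0 then UNIV else Big (Max (A (n-1))))"
  have "(\<Inter>s\<in>U. shift Y s) \<in> p" using filt_finite_Inter[OF fp fU] UY Y by blast
  moreover have "(if n = 0 then UNIV else Big (Max (A (n-1)))) \<in> p"
    using filt_UNIV[OF fp] delta_Big[OF dp] by simp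
  ultimately have "C \<in> p" unfolding C_def using Y filt_Int[OF fp] by simp
  then obtain a where a: "a \<in> C" using filt_ne[OF fp] by blast
  have aY: "a \<in> Y" and aU: "\<And>s. s \<in> U \<Longrightarrow> a \<in> shift Y s" using a unfolding C_def by auto
  have aB: "n \<noteq> 0 \<Longrightarrow> Max (A (n-1)) < Min a" using a unfolding C_def Big_def by auto
  let ?A = "A(n:=a)"
  have "okf Y ?A (Suc n)" unfolding okf_def
  proof (intro conjI allI impI)
    fix i assume "i < Suc n"
    then show "?A i \<in> Fin" using ok aY Y(3) unfolding okf_def by (cases "i = n") auto
  next
    fix i assume i: "Suc i < Suc n"
    show "Max (?A i) < Min (?A (Suc i))"
    proof (cases "Suc i = n")
      case True then show ?thesis using aB by auto
    next
      case False then show ?thesis using i ok unfolding okf_def by auto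
    qed
  next
    fix F assume F: "F \<noteq> {} \<and> F \<subseteq> {..<Suc n}"
    show "(\<Union>i\<in>F. ?A i) \<in> Y"
    proof (cases "n \<in> F")
      case False
      then have "F \<subseteq> {..<n}" using F by (auto simp: less_Suc_eq)
      moreover then have "(\<Union>i\<in>F. ?A i) = (\<Union>i\<in>F. A i)" by auto
      ultimately show ?thesis using ok F unfolding okf_def by auto
    next
      case True
      show ?thesis
      proof (cases "F = {n}")
        case True then show ?thesis using aY by simp
      next
        case False
        define F' where "F' = F - {n}"
        have F': "F' \<noteq> {}" "F' \<subseteq> {..<n}" using False True F unfolding F'_def by auto
        have "(\<Union>i\<in>F. ?A i) = (\<Union>i\<in>F'. A i) \<union> a"
        proof -
          have "F = insert n F'" using True unfolding F'_def by auto
          moreover have "n \<notin> F'" unfolding F'_def by simp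
          then have "(\<Union>i\<in>F'. ?A i) = (\<Union>i\<in>F'. A i)" by auto
          ultimately show ?thesis using \<open>n \<notin> F'\<close> by (simp add: Un_commute)
        qed
        moreover have "(\<Union>i\<in>F'. A i) \<in> U" unfolding U_def using F' by blast
        then have "a \<in> shift Y (\<Union>i\<in>F'. A i)" using aU by blast
        then have "(\<Union>i\<in>F'. A i) \<union> a \<in> Y" unfolding shift_def by simp
        with \<open>(\<Union>i\<in>F. ?A i) = (\<Union>i\<in>F'. A i) \<union> a\<close> show ?thesis by simp
      qed
    qed
  qed
  then show ?thesis by blast
qed

primrec Gs :: "nat set set \<Rightarrow> nat \<Rightarrow> (nat \<Rightarrow> nat set)" where
  "Gs Y 0 = (\<lambda>_. {})"
| "Gs Y (Suc n) = (Gs Y n)(n := (SOME a. okf Y ((Gs Y n)(n:=a)) (Suc n)))"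

lemma Gs_stable: "m \<le> n \<Longrightarrow> i < m \<Longrightarrow> Gs Y n i = Gs Y m i"
proof (induction n)
  case 0 then show ?case by simp
next
  case (Suc n)
  show ?case
  proof (cases "m = Suc n")
    case True then show ?thesis by simp
  next
    case False
    then have "m \<le> n" "i \<noteq> n" using Suc.prems by auto
    then have "Gs Y (Suc n) i = Gs Y n i" by simp
    then show ?thesis using Suc.IH Suc.prems \<open>m \<le> n\<close> by simp
  qed
qed

lemma seq_exists:
  assumes dp: "delta p" and idem: "pl p p = p" and Y: "Y \<in> p"
  shows "\<exists>A. (\<forall>i. A i \<in> Fin \<and> 0 < Min (A i)) \<and> (\<forall>i. Max (A i) < Min (A (Suc i))) \<and>
             (\<forall>F. finite F \<and> F \<noteq> {} \<longrightarrow> (\<Union>i\<in>F. A i) \<in> Y)"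
proof -
  have fp: "filt p" using dp delta_filt by blast
  define Y0 where "Y0 = star p (Y \<inter> Big 0)"
  have Y0p: "Y0 \<in> p" unfolding Y0_def using star_in[OF dp idem] Y delta_Big[OF dp] filt_Int[OF fp] by blast
  have Y0s: "\<forall>a\<in>Y0. shift Y0 a \<in> p" unfolding Y0_def using star_shift[OF dp idem] by blast
  have Y0sub: "Y0 \<subseteq> Y \<inter> Big 0" unfolding Y0_def star_def by blast
  then have Y0F: "Y0 \<subseteq> Fin" using Big_Fin by blast
  have okG: "okf Y0 (Gs Y0 n) n" for n
  proof (induction n)
    case 0 then show ?case by (rule okf_0)
  next
    case (Suc n)
    then have "\<exists>a. okf Y0 ((Gs Y0 n)(n:=a)) (Suc n)" using okf_step[OF dp Y0p Y0s Y0F] by blast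
    then have "okf Y0 ((Gs Y0 n)(n := (SOME a. okf Y0 ((Gs Y0 n)(n:=a)) (Suc n)))) (Suc n)"
      by (rule someI_ex)
    then show ?case by (simp only: Gs.simps)
  qed
  define A where "A i = Gs Y0 (Suc i) i" for i
  have okA: "okf Y0 A n" for n
  proof -
    have "\<forall>i<n. A i = Gs Y0 n i"
    proof (intro allI impI)
      fix i assume "i < n" then show "A i = Gs Y0 n i" unfolding A_def using Gs_stable[of "Suc i" n i Y0] by simp
    qed
    then show ?thesis using okG okf_cong by blast
  qed
  have "\<forall>i. A i \<in> Fin \<and> 0 < Min (A i)"
  proof
    fix i
    have "(\<Union>j\<in>{i}. A j) \<in> Y0" using okA[of "Suc i"] unfolding okf_def by blast
    then have "A i \<in> Big 0" using Y0sub by auto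
    then show "A i \<in> Fin \<and> 0 < Min (A i)" unfolding Big_def Fin_def by auto
  qed
  moreover have "\<forall>i. Max (A i) < Min (A (Suc i))" using okA unfolding okf_def by blast
  moreover have "\<forall>F. finite F \<and> F \<noteq> {} \<longrightarrow> (\<Union>i\<in>F. A i) \<in> Y"
  proof (intro allI impI)
    fix F :: "nat set" assume F: "finite F \<and> F \<noteq> {}"
    then have "F \<subseteq> {..<Suc (Max F)}" by (auto simp: less_Suc_eq_le)
    then show "(\<Union>i\<in>F. A i) \<in> Y" using okA[of "Suc (Max F)"] F Y0sub unfolding okf_def by blast
  qed
  ultimately show ?thesis by blast
qed


primrec good :: "nat set set set \<Rightarrow> nat \<Rightarrow> nat set list set \<Rightarrow> bool" where
  "good p 0 X = ({b. [b] \<in> X} \<in> p)"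
| "good p (Suc k) X = ({a. good p k {t. a # t \<in> X}} \<in> p)"

lemma good_mono: "filt p \<Longrightarrow> good p k X \<Longrightarrow> X \<subseteq> Y \<Longrightarrow> good p k Y"
proof (induction k arbitrary: X Y)
  case 0
  have "{b. [b] \<in> X} \<subseteq> {b. [b] \<in> Y}" using 0 by auto
  then show ?case using 0 filt_up by fastforce
next
  case (Suc k)
  have "{a. good p k {t. a # t \<in> X}} \<subseteq> {a. good p k {t. a # t \<in> Y}}"
  proof
    fix a assume "a \<in> {a. good p k {t. a # t \<in> X}}"
    moreover have "{t. a # t \<in> X} \<subseteq> {t. a # t \<in> Y}" using Suc.prems by auto
    ultimately show "a \<in> {a. good p k {t. a # t \<in> Y}}" using Suc.IH Suc.prems(1) by blast
  qed
  then show ?case using Suc.prems filt_up by fastforce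
qed

lemma good_Int: "filt p \<Longrightarrow> good p k X \<Longrightarrow> good p k Y \<Longrightarrow> good p k (X \<inter> Y)"
proof (induction k arbitrary: X Y)
  case 0
  have "{b. [b] \<in> X \<inter> Y} = {b. [b] \<in> X} \<inter> {b. [b] \<in> Y}" by auto
  then show ?case using 0 filt_Int by fastforce
next
  case (Suc k)
  have "{a. good p k {t. a # t \<in> X}} \<inter> {a. good p k {t. a # t \<in> Y}} \<subseteq> {a. good p k {t. a # t \<in> X \<inter> Y}}"
  proof
    fix a assume "a \<in> {a. good p k {t. a # t \<in> X}} \<inter> {a. good p k {t. a # t \<in> Y}}"
    then have "good p k ({t. a # t \<in> X} \<inter> {t. a # t \<in> Y})" using Suc.IH Suc.prems(1) by blast
    moreover have "{t. a # t \<in> X} \<inter> {t. a # t \<in> Y} = {t. a # t \<in> X \<inter> Y}" by auto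
    ultimately show "a \<in> {a. good p k {t. a # t \<in> X \<inter> Y}}" by simp
  qed
  moreover have "{a. good p k {t. a # t \<in> X}} \<inter> {a. good p k {t. a # t \<in> Y}} \<in> p"
    using Suc.prems filt_Int by fastforce
  ultimately show ?case using Suc.prems(1) filt_up by fastforce
qed

lemma good_UNIV: "filt p \<Longrightarrow> good p k UNIV"
  by (induction k) (simp_all add: filt_UNIV)

lemma good_empty: "filt p \<Longrightarrow> \<not> good p k {}"
  by (induction k) (simp_all add: filt_empty)

lemma good_compl: "ultra p \<Longrightarrow> good p k X \<or> good p k (-X)"
proof (induction k arbitrary: X)
  case 0
  have "{b. [b] \<in> -X} = -{b. [b] \<in> X}" by auto
  then show ?case using 0 ultra_compl by fastforce
next
  case (Suc k)
  show ?case
  proof (cases "good p (Suc k) X")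
    case True then show ?thesis by blast
  next
    case False
    then have "-{a. good p k {t. a # t \<in> X}} \<in> p" using Suc.prems ultra_compl by fastforce
    moreover have "-{a. good p k {t. a # t \<in> X}} \<subseteq> {a. good p k {t. a # t \<in> -X}}"
    proof
      fix a assume "a \<in> -{a. good p k {t. a # t \<in> X}}"
      then have "good p k (-{t. a # t \<in> X})" using Suc.IH[OF Suc.prems] by blast
      moreover have "-{t. a # t \<in> X} = {t. a # t \<in> -X}" by auto
      ultimately show "a \<in> {a. good p k {t. a # t \<in> -X}}" by simp
    qed
    ultimately show ?thesis using Suc.prems ultra_filt filt_up by fastforce
  qed
qed

lemma good_Un: assumes "ultra p" "good p k (X \<union> Y)" shows "good p k X \<or> good p k Y"
proof (rule ccontr)
  assume "\<not> (good p k X \<or> good p k Y)"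
  then have "good p k (-X)" "good p k (-Y)" using good_compl assms(1) by blast+
  then have "good p k (-X \<inter> -Y)" using good_Int ultra_filt assms(1) by blast
  then have "good p k ((X \<union> Y) \<inter> (-X \<inter> -Y))" using good_Int ultra_filt assms by blast
  moreover have "(X \<union> Y) \<inter> (-X \<inter> -Y) = {}" by blast
  ultimately have "good p k {}" by simp
  then show False using good_empty[OF ultra_filt[OF assms(1)]] by blast
qed

lemma good_finite_Un:
  assumes "ultra p" "finite J" shows "good p k (\<Union>j\<in>J. X j) \<Longrightarrow> \<exists>j\<in>J. good p k (X j)"
  using assms(2)
proof (induction J rule: finite_induct)
  case empty then show ?case using good_empty[OF ultra_filt[OF assms(1)]] by simp
next
  case (insert j J)
  then have "good p k (X j \<union> (\<Union>j\<in>J. X j))" by simp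
  then show ?case using good_Un[OF assms(1)] insert by blast
qed

lemma good_finite_Int:
  assumes "filt p" "finite J" shows "\<forall>j\<in>J. good p k (X j) \<Longrightarrow> good p k (\<Inter>j\<in>J. X j)"
  using assms(2)
proof (induction J rule: finite_induct)
  case empty then show ?case using good_UNIV assms(1) by simp
next
  case (insert j J)
  then show ?case using good_Int[OF assms(1)] by simp
qed

lemma prod_lemma:
  assumes dp: "delta p" and idem: "pl p p = p"
  shows "good p k X \<Longrightarrow> \<exists>B :: nat \<Rightarrow> nat \<Rightarrow> nat set.
     (\<forall>i n. B i n \<in> Fin \<and> 0 < Min (B i n) \<and> Max (B i n) < Min (B i (Suc n))) \<and>
     (\<forall>Fs :: nat \<Rightarrow> nat set. (\<forall>i<k. Fs i \<noteq> {} \<and> Fs i \<subseteq> {..<m}) \<and> Fs k \<noteq> {} \<and> finite (Fs k)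
        \<longrightarrow> map (\<lambda>i. \<Union>n\<in>Fs i. B i n) [0..<Suc k] \<in> X)"
proof (induction k arbitrary: X)
  case 0
  then have "{b. [b] \<in> X} \<in> p" by simp
  then obtain A where A: "\<forall>i. A i \<in> Fin \<and> 0 < Min (A i)" "\<forall>i. Max (A i) < Min (A (Suc i))"
    "\<forall>F. finite F \<and> F \<noteq> {} \<longrightarrow> (\<Union>i\<in>F. A i) \<in> {b. [b] \<in> X}"
    using seq_exists[OF dp idem] by blast
  show ?case
    by (rule exI[of _ "\<lambda>i. A"]) (use A in auto)
next
  case (Suc k)
  have fp: "filt p" using dp delta_filt by blast
  define U where "U = {a. good p k {t. a # t \<in> X}}"
  have "U \<in> p" using Suc.prems unfolding U_def by simp
  then obtain A where A: "\<forall>i. A i \<in> Fin \<and> 0 < Min (A i)" "\<forall>i. Max (A i) < Min (A (Suc i))"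
    "\<forall>F. finite F \<and> F \<noteq> {} \<longrightarrow> (\<Union>i\<in>F. A i) \<in> U"
    using seq_exists[OF dp idem] by blast
  define AA where "AA = (\<lambda>F. \<Union>n\<in>F. A n) ` {F. F \<noteq> {} \<and> F \<subseteq> {..<m}}"
  have fAA: "finite AA" unfolding AA_def by (rule finite_imageI) (rule finite_subset[of _ "Pow {..<m}"], auto)
  have AAU: "AA \<subseteq> U" unfolding AA_def using A(3) finite_subset by blast
  define X' where "X' = (\<Inter>a\<in>AA. {t. a # t \<in> X})"
  have "\<forall>a\<in>AA. good p k {t. a # t \<in> X}" using AAU unfolding U_def by blast
  then have "good p k X'" unfolding X'_def
    using good_finite_Int[OF fp fAA, of k "\<lambda>a. {t. a # t \<in> X}"] by blast
  then obtain B' where B': "\<forall>i n. B' i n \<in> Fin \<and> 0 < Min (B' i n) \<and> Max (B' i n) < Min (B' i (Suc n))"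
    "\<forall>Fs :: nat \<Rightarrow> nat set. (\<forall>i<k. Fs i \<noteq> {} \<and> Fs i \<subseteq> {..<m}) \<and> Fs k \<noteq> {} \<and> finite (Fs k)
        \<longrightarrow> map (\<lambda>i. \<Union>n\<in>Fs i. B' i n) [0..<Suc k] \<in> X'"
    using Suc.IH[OF \<open>good p k X'\<close>] by blast
  define B where "B = (\<lambda>i. if i = 0 then A else B' (i - 1))"
  have "\<forall>i n. B i n \<in> Fin \<and> 0 < Min (B i n) \<and> Max (B i n) < Min (B i (Suc n))"
    unfolding B_def using A B'(1) by (simp split: if_splits)
  moreover have "\<forall>Fs :: nat \<Rightarrow> nat set. (\<forall>i<Suc k. Fs i \<noteq> {} \<and> Fs i \<subseteq> {..<m}) \<and> Fs (Suc k) \<noteq> {} \<and> finite (Fs (Suc k))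
        \<longrightarrow> map (\<lambda>i. \<Union>n\<in>Fs i. B i n) [0..<Suc (Suc k)] \<in> X"
  proof (intro allI impI)
    fix Fs :: "nat \<Rightarrow> nat set"
    assume Fs: "(\<forall>i<Suc k. Fs i \<noteq> {} \<and> Fs i \<subseteq> {..<m}) \<and> Fs (Suc k) \<noteq> {} \<and> finite (Fs (Suc k))"
    define Fs' where "Fs' = (\<lambda>i. Fs (Suc i))"
    have "(\<forall>i<k. Fs' i \<noteq> {} \<and> Fs' i \<subseteq> {..<m}) \<and> Fs' k \<noteq> {} \<and> finite (Fs' k)"
      unfolding Fs'_def using Fs by auto
    then have tl: "map (\<lambda>i. \<Union>n\<in>Fs' i. B' i n) [0..<Suc k] \<in> X'" using spec[OF B'(2), of Fs'] by (rule mp[rotated])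
    have hd: "(\<Union>n\<in>Fs 0. A n) \<in> AA" unfolding AA_def using Fs by blast
    have "map (\<lambda>i. \<Union>n\<in>Fs i. B i n) [0..<Suc (Suc k)] =
          (\<Union>n\<in>Fs 0. A n) # map (\<lambda>i. \<Union>n\<in>Fs' i. B' i n) [0..<Suc k]"
      unfolding map_upt_Suc[of _ "Suc k"] B_def Fs'_def by simp
    then show "map (\<lambda>i. \<Union>n\<in>Fs i. B i n) [0..<Suc (Suc k)] \<in> X"
      using tl hd unfolding X'_def by (simp only: INT_iff mem_Collect_eq)
  qed
  ultimately show ?case by blast
qed


lemma osum_Cons: "ys \<noteq> [] \<Longrightarrow> osum f x (n # ys) = Option.bind (osum f x ys) (\<lambda>s. f (x n) s)"
  by (cases ys) auto

lemma osum_in: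
  assumes ps: "partial_semigroup S f"
  shows "\<forall>n\<in>set L. x n \<in> S \<Longrightarrow> osum f x L = Some s \<Longrightarrow> s \<in> S"
proof (induction L arbitrary: s)
  case Nil then show ?case by simp
next
  case (Cons n L)
  show ?case
  proof (cases "L = []")
    case True then show ?thesis using Cons by simp
  next
    case False
    then obtain t where t: "osum f x L = Some t" "f (x n) t = Some s"
      using Cons.prems osum_Cons[OF False, of f x n] by (cases "osum f x L") auto
    then have "t \<in> S" using Cons by simp
    moreover have "x n \<in> S" using Cons.prems by simp
    ultimately show ?thesis using t ps unfolding partial_semigroup_def by blast
  qed
qed

lemma osum_append:
  assumes ps: "partial_semigroup S f"
  shows "L1 \<noteq> [] \<Longrightarrow> L2 \<noteq> [] \<Longrightarrow> \<forall>n\<in>set L1 \<union> set L2. x n \<in> S \<Longrightarrow>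
    osum f x (L1 @ L2) = Option.bind (osum f x L1) (\<lambda>u. Option.bind (osum f x L2) (\<lambda>w. f u w))"
proof (induction L1)
  case Nil then show ?case by simp
next
  case (Cons n L1)
  show ?case
  proof (cases "L1 = []")
    case True then show ?thesis using Cons osum_Cons by simp
  next
    case False
    have e1: "osum f x ((n # L1) @ L2) = Option.bind (osum f x (L1 @ L2)) (\<lambda>s. f (x n) s)"
      using osum_Cons[of "L1 @ L2" f x n] False by simp
    have e2: "osum f x (n # L1) = Option.bind (osum f x L1) (\<lambda>s. f (x n) s)"
      by (rule osum_Cons[OF False])
    have IH: "osum f x (L1 @ L2) = Option.bind (osum f x L1) (\<lambda>u. Option.bind (osum f x L2) (\<lambda>w. f u w))"
      using Cons False by simp
    show ?thesis
    proof (cases "osum f x L1")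
      case None then show ?thesis using e1 e2 IH by simp
    next
      case (Some u)
      have uS: "u \<in> S" using osum_in[OF ps, of L1 x u] Some Cons.prems by simp
      show ?thesis
      proof (cases "osum f x L2")
        case None then show ?thesis using e1 e2 IH Some by simp
      next
        case (Some w)
        have wS: "w \<in> S" using osum_in[OF ps, of L2 x w] Some Cons.prems by simp
        have xS: "x n \<in> S" using Cons.prems by simp
        have "Option.bind (f (x n) u) (\<lambda>z. f z w) = Option.bind (f u w) (\<lambda>y. f (x n) y)"
          using ps xS uS wS unfolding partial_semigroup_def by blast
        then show ?thesis using e1 e2 IH Some \<open>osum f x L1 = Some u\<close> by simp
      qed
    qed
  qed
qed

lemma sl_union:
  assumes "finite A" "finite B" "\<forall>u\<in>A. \<forall>v\<in>B. u < v"
  shows "sorted_list_of_set (A \<union> B) = sorted_list_of_set A @ sorted_list_of_set (B :: nat set)"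
proof -
  have "sorted_wrt (<) (sorted_list_of_set A @ sorted_list_of_set B)"
    using assms by (simp add: sorted_wrt_append)
  moreover have "sorted_wrt (<) (sorted_list_of_set (A \<union> B))" by simp
  moreover have "set (sorted_list_of_set A @ sorted_list_of_set B) = set (sorted_list_of_set (A \<union> B))"
    using assms by simp
  ultimately show ?thesis using strict_sorted_equal by blast
qed

lemma fsum_single: "fsum f x {a} = Some (x a)" unfolding fsum_def by simp

lemma fsum_insert_min:
  assumes "finite F" "F \<noteq> {}" "\<forall>v\<in>F. a < v"
  shows "fsum f y (insert a F) = Option.bind (fsum f y F) (\<lambda>s. f (y a) s)"
proof -
  have "sorted_list_of_set (insert a F) = sorted_list_of_set {a} @ sorted_list_of_set F"
    using sl_union[of "{a}" F] assms by simp
  then have e: "sorted_list_of_set (insert a F) = a # sorted_list_of_set F" by simp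
  have ne: "sorted_list_of_set F \<noteq> []" using assms by simp
  show ?thesis unfolding fsum_def e by (rule osum_Cons[OF ne])
qed

lemma fsum_union:
  assumes ps: "partial_semigroup S f" and "finite A" "finite B" "A \<noteq> {}" "B \<noteq> {}"
    "\<forall>u\<in>A. \<forall>v\<in>B. u < v" "\<forall>n\<in>A \<union> B. x n \<in> S"
  shows "fsum f x (A \<union> B) = Option.bind (fsum f x A) (\<lambda>u. Option.bind (fsum f x B) (\<lambda>w. f u w))"
  unfolding fsum_def sl_union[OF assms(2,3,6)]
  by (rule osum_append[OF ps]) (use assms in auto)

lemma fsum_in:
  assumes ps: "partial_semigroup S f" and "\<forall>n\<in>G. x n \<in> S" "finite G" "fsum f x G = Some s"
  shows "s \<in> S"
  using osum_in[OF ps, of "sorted_list_of_set G" x s] assms unfolding fsum_def by simp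

lemma fsum_blocks:
  assumes ps: "partial_semigroup S f"
  shows "finite F \<Longrightarrow> F \<noteq> {} \<Longrightarrow>
    (\<forall>n\<in>F. finite (H n) \<and> H n \<noteq> {} \<and> (\<forall>u\<in>H n. x u \<in> S) \<and> fsum f x (H n) = Some (y n)) \<Longrightarrow>
    (\<forall>a\<in>F. \<forall>b\<in>F. a < b \<longrightarrow> (\<forall>u\<in>H a. \<forall>v\<in>H b. u < v)) \<Longrightarrow>
    fsum f y F = fsum f x (\<Union>n\<in>F. H n)"
proof (induction F rule: finite_linorder_min_induct)
  case empty then show ?case by simp
next
  case (insert a F)
  show ?case
  proof (cases "F = {}")
    case True
    have "fsum f x (H a) = Some (y a)" using insert.prems(2) by simp
    then show ?thesis using True fsum_single[of f y a] by simp
  next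
    case False
    have p1: "\<forall>n\<in>F. finite (H n) \<and> H n \<noteq> {} \<and> (\<forall>u\<in>H n. x u \<in> S) \<and> fsum f x (H n) = Some (y n)"
      using insert.prems(2) by simp
    have p2: "\<forall>a\<in>F. \<forall>b\<in>F. a < b \<longrightarrow> (\<forall>u\<in>H a. \<forall>v\<in>H b. u < v)"
    proof (intro ballI impI)
      fix a' b' u v assume "a' \<in> F" "b' \<in> F" "a' < b'" "u \<in> H a'" "v \<in> H b'"
      then show "u < v" using insert.prems(3) by blast
    qed
    have IH: "fsum f y F = fsum f x (\<Union>n\<in>F. H n)" by (rule insert.IH[OF False p1 p2])
    have e1: "fsum f y (insert a F) = Option.bind (fsum f y F) (\<lambda>s. f (y a) s)"
      by (rule fsum_insert_min) (use insert.hyps False in auto)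
    have "fsum f x (H a \<union> (\<Union>n\<in>F. H n)) =
          Option.bind (fsum f x (H a)) (\<lambda>u. Option.bind (fsum f x (\<Union>n\<in>F. H n)) (\<lambda>w. f u w))"
    proof (rule fsum_union[OF ps])
      show "finite (H a)" "H a \<noteq> {}" using insert.prems(2) by auto
      show "finite (\<Union>n\<in>F. H n)" using insert.hyps p1 by auto
      show "(\<Union>n\<in>F. H n) \<noteq> {}" using p1 False by auto
      show "\<forall>u\<in>H a. \<forall>v\<in>\<Union>n\<in>F. H n. u < v"
      proof (intro ballI)
        fix u v assume "u \<in> H a" "v \<in> (\<Union>n\<in>F. H n)"
        then obtain b where "b \<in> F" "v \<in> H b" by blast
        then show "u < v" using insert.prems(3) insert.hyps(2) \<open>u \<in> H a\<close> by blast
      qed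
      show "\<forall>n\<in>H a \<union> (\<Union>n\<in>F. H n). x n \<in> S" using insert.prems(2) by blast
    qed
    then have "fsum f x (\<Union>n\<in>insert a F. H n) = Option.bind (fsum f x (\<Union>n\<in>F. H n)) (\<lambda>w. f (y a) w)"
      using insert.prems(2) by simp
    then show ?thesis using e1 IH by simp
  qed
qed


lemma Fin_Min_le_Max: "A \<in> Fin \<Longrightarrow> Min A \<le> Max A"
  unfolding Fin_def by simp

lemma chain_lt:
  assumes B: "\<forall>n. B n \<in> Fin \<and> Max (B n) < Min (B (Suc n))"
  shows "a < b \<Longrightarrow> Max (B a) < Min (B b)"
proof (induction b)
  case 0 then show ?case by simp
next
  case (Suc b)
  show ?case
  proof (cases "a = b")
    case True then show ?thesis using B by simp
  next
    case False
    then have "a < b" using Suc.prems by simp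
    then have "Max (B a) < Min (B b)" using Suc.IH by simp
    moreover have "Min (B b) \<le> Max (B b)" using B Fin_Min_le_Max by blast
    moreover have "Max (B b) < Min (B (Suc b))" using B by simp
    ultimately show ?thesis by linarith
  qed
qed

lemma block_lt:
  assumes B: "\<forall>n. B n \<in> Fin \<and> Max (B n) < Min (B (Suc n))" and "a < b" "u \<in> B a" "v \<in> B b"
  shows "u < v"
proof -
  have "u \<le> Max (B a)" using assms unfolding Fin_def by simp
  moreover have "Min (B b) \<le> v" using assms unfolding Fin_def by simp
  moreover have "Max (B a) < Min (B b)" using chain_lt[OF B assms(2)] .
  ultimately show ?thesis by linarith
qed

theorem theorem8:
  fixes l m r :: nat
    and S :: "nat \<Rightarrow> 'a set"
    and op :: "nat \<Rightarrow> 'a \<Rightarrow> 'a \<Rightarrow> 'a option"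
    and x :: "nat \<Rightarrow> nat \<Rightarrow> 'a"
    and D :: "nat \<Rightarrow> (nat \<Rightarrow> 'a) set"
  assumes l: "l \<ge> 2" and m: "m \<ge> 1" and r: "r \<ge> 1"
    and ps: "\<forall>i\<in>{1..l}. partial_semigroup (S i) (op i) \<and> commutative_ps (S i) (op i)
                 \<and> adequate (S i) (op i) \<and> countable (S i)"
    and xs: "\<forall>i\<in>{1..l}. adequate_seq (S i) (op i) (x i)"
    and cover: "(PiE {1..l} S) = (\<Union>j\<in>{1..r}. D j)"
  shows "\<exists>j\<in>{1..r}. \<exists>y :: nat \<Rightarrow> nat \<Rightarrow> 'a.
           (\<forall>i\<in>{1..l-1}. product_subsystem_fin (op i) (x i) 1 m (y i)) \<and>
           product_subsystem_inf (op l) (x l) 1 (y l) \<and>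
           PiE {1..l} (\<lambda>i. if i < l then FS (op i) (y i) {1..m} else FS (op l) (y l) {1..})
             \<subseteq> D j"
proof -
  obtain p where dp: "delta p" and idem: "pl p p = p" using idem_exists by blast
  have fp: "filt p" using dp delta_filt by blast
  define k where "k = l - 1"
  have lk: "l = Suc k" using l unfolding k_def by simp
  define proper :: "nat set list \<Rightarrow> bool" where
    "proper t \<longleftrightarrow> length t = l \<and> (\<forall>i<l. finite (t!i) \<and> t!i \<noteq> {} \<and> t!i \<subseteq> {1..})" for t
  define emb :: "nat set list \<Rightarrow> nat \<Rightarrow> 'a" where
    "emb t = (\<lambda>i. if i \<in> {1..l} then the (fsum (op i) (x i) (t!(i-1))) else undefined)" for t
  define Xj where "Xj j = {t. proper t \<longrightarrow> emb t \<in> D j}" for j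
  have defd: "\<And>i G. i \<in> {1..l} \<Longrightarrow> finite G \<Longrightarrow> G \<noteq> {} \<Longrightarrow> G \<subseteq> {1..} \<Longrightarrow> fsum (op i) (x i) G \<noteq> None"
    using xs unfolding adequate_seq_def by blast
  have xS: "\<And>i n. i \<in> {1..l} \<Longrightarrow> n \<ge> 1 \<Longrightarrow> x i n \<in> S i" using xs unfolding adequate_seq_def by blast
  have psi: "\<And>i. i \<in> {1..l} \<Longrightarrow> partial_semigroup (S i) (op i)" using ps by blast
  have sumS: "the (fsum (op i) (x i) G) \<in> S i"
    if a: "i \<in> {1..l}" "finite G" "G \<noteq> {}" "G \<subseteq> {1..}" for i G
  proof -
    obtain s where s: "fsum (op i) (x i) G = Some s" using defd[OF a] by blast
    have "\<forall>n\<in>G. x i n \<in> S i" using a xS by auto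
    then have "s \<in> S i" using fsum_in[OF psi[OF a(1)] _ a(2) s] by blast
    then show ?thesis using s by simp
  qed
  have cov: "t \<in> (\<Union>j\<in>{1..r}. Xj j)" for t
  proof (cases "proper t")
    case False
    then have "t \<in> Xj 1" unfolding Xj_def by simp
    then show ?thesis using r by auto
  next
    case True
    have "emb t \<in> PiE {1..l} S"
    proof (rule PiE_I)
      fix i assume i: "i \<in> {1..l}"
      have "i - 1 < l" using i by auto
      then have "finite (t!(i-1))" "t!(i-1) \<noteq> {}" "t!(i-1) \<subseteq> {1..}" using True unfolding proper_def by auto
      then show "emb t i \<in> S i" unfolding emb_def using sumS i by simp
    next
      fix i assume "i \<notin> {1..l}" then show "emb t i = undefined" unfolding emb_def by auto
    qed
    then obtain j where "j \<in> {1..r}" "emb t \<in> D j" using cover by blast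
    then show ?thesis unfolding Xj_def by blast
  qed
  then have "(\<Union>j\<in>{1..r}. Xj j) = UNIV" by blast
  then have "good p k (\<Union>j\<in>{1..r}. Xj j)" using good_UNIV[OF fp] by simp
  then obtain j where j: "j \<in> {1..r}" "good p k (Xj j)"
    using good_finite_Un[OF delta_ultra[OF dp], of "{1..r}"] by blast
  obtain B where B1: "\<forall>i n. B i n \<in> Fin \<and> 0 < Min (B i n) \<and> Max (B i n) < Min (B i (Suc n))"
    and B2: "\<forall>Fs :: nat \<Rightarrow> nat set. (\<forall>i<k. Fs i \<noteq> {} \<and> Fs i \<subseteq> {..<m}) \<and> Fs k \<noteq> {} \<and> finite (Fs k)
        \<longrightarrow> map (\<lambda>i. \<Union>n\<in>Fs i. B i n) [0..<Suc k] \<in> Xj j"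
    using prod_lemma[OF dp idem j(2), of m] by blast
  have B1': "\<forall>n. B i n \<in> Fin \<and> Max (B i n) < Min (B i (Suc n))" for i using B1 by blast
  define H where "H i n = B (i - 1) (n - 1)" for i n
  define y where "y i n = the (fsum (op i) (x i) (H i n))" for i n
  have Bfin: "finite (B i n) \<and> B i n \<noteq> {} \<and> B i n \<subseteq> {1..}" for i n
  proof -
    have "B i n \<in> Fin" "0 < Min (B i n)" using B1 by auto
    moreover have "\<And>u. u \<in> B i n \<Longrightarrow> Min (B i n) \<le> u" using \<open>B i n \<in> Fin\<close> unfolding Fin_def by simp
    have "\<forall>u\<in>B i n. 1 \<le> u"
    proof
      fix u assume "u \<in> B i n"
      then have "Min (B i n) \<le> u" using \<open>B i n \<in> Fin\<close> unfolding Fin_def by simp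
      then show "1 \<le> u" using \<open>0 < Min (B i n)\<close> by linarith
    qed
    moreover have "finite (B i n)" "B i n \<noteq> {}" using \<open>B i n \<in> Fin\<close> unfolding Fin_def by auto
    ultimately show ?thesis by (simp add: subset_eq)
  qed
  have Hfin: "finite (H i n) \<and> H i n \<noteq> {} \<and> H i n \<subseteq> {1..}" for i n unfolding H_def by (rule Bfin)
  have Hsum: "fsum (op i) (x i) (H i n) = Some (y i n)" if "i \<in> {1..l}" for i n
  proof -
    have "fsum (op i) (x i) (H i n) \<noteq> None" using defd[OF that, of "H i n"] Hfin[of i n] by simp
    then show ?thesis unfolding y_def by auto
  qed
  have Hord: "Max (H i n) < Min (H i (Suc n))" if "n \<ge> 1" for i n
  proof -
    have "Max (B (i-1) (n-1)) < Min (B (i-1) (Suc (n-1)))" using B1 by blast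
    moreover have "Suc (n-1) = n" using that by simp
    ultimately show ?thesis unfolding H_def by simp
  qed
  have Hmin: "Min (H i 1) \<ge> 1" for i
  proof -
    have "0 < Min (B (i - 1) 0)" using B1 by blast
    then show ?thesis unfolding H_def by simp
  qed
  have fin_part: "\<forall>i\<in>{1..l-1}. product_subsystem_fin (op i) (x i) 1 m (y i)"
  proof
    fix i assume i: "i \<in> {1..l-1}"
    then have il: "i \<in> {1..l}" by auto
    show "product_subsystem_fin (op i) (x i) 1 m (y i)" unfolding product_subsystem_fin_def
    proof (rule exI[of _ "H i"], intro conjI)
      show "\<forall>n\<in>{1..m}. finite (H i n) \<and> H i n \<noteq> {}" using Hfin by blast
      show "1 \<le> m \<longrightarrow> 1 \<le> Min (H i 1)" using Hmin by blast
      show "\<forall>n. 1 \<le> n \<and> n < m \<longrightarrow> Max (H i n) < Min (H i (Suc n))" using Hord by blast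
      show "\<forall>n\<in>{1..m}. fsum (op i) (x i) (H i n) = Some (y i n)" using Hsum[OF il] by blast
    qed
  qed
  have inf_part: "product_subsystem_inf (op l) (x l) 1 (y l)" unfolding product_subsystem_inf_def
  proof (rule exI[of _ "H l"], intro conjI)
    have ll: "l \<in> {1..l}" using l by auto
    show "\<forall>n\<ge>1. finite (H l n) \<and> H l n \<noteq> {}" using Hfin by blast
    show "1 \<le> Min (H l 1)" using Hmin by blast
    show "\<forall>n\<ge>1. Max (H l n) < Min (H l (Suc n))" using Hord by blast
    show "\<forall>n\<ge>1. fsum (op l) (x l) (H l n) = Some (y l n)" using Hsum[OF ll] by blast
  qed
  have sub: "PiE {1..l} (\<lambda>i. if i < l then FS (op i) (y i) {1..m} else FS (op l) (y l) {1..}) \<subseteq> D j"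
  proof
    fix g assume g: "g \<in> PiE {1..l} (\<lambda>i. if i < l then FS (op i) (y i) {1..m} else FS (op l) (y l) {1..})"
    define R where "R i = (if i < l then {1..m} else {(1::nat)..})" for i
    have "\<forall>i\<in>{1..l}. \<exists>F. finite F \<and> F \<noteq> {} \<and> F \<subseteq> R i \<and> fsum (op i) (y i) F = Some (g i)"
    proof
      fix i assume i: "i \<in> {1..l}"
      have gi: "g i \<in> (if i < l then FS (op i) (y i) {1..m} else FS (op l) (y l) {1..})"
        using g i by (simp add: PiE_iff)
      show "\<exists>F. finite F \<and> F \<noteq> {} \<and> F \<subseteq> R i \<and> fsum (op i) (y i) F = Some (g i)"
      proof (cases "i < l")
        case True then show ?thesis using gi unfolding FS_def R_def by simp
      next
        case False then have "i = l" using i by simp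
        then show ?thesis using gi unfolding FS_def R_def by simp
      qed
    qed
    then obtain Fc where Fc: "\<And>i. i \<in> {1..l} \<Longrightarrow> finite (Fc i) \<and> Fc i \<noteq> {} \<and> Fc i \<subseteq> R i \<and> fsum (op i) (y i) (Fc i) = Some (g i)"
      by metis
    have Fc1: "Fc i \<subseteq> {1..}" if "i \<in> {1..l}" for i
      using Fc[OF that] unfolding R_def by (auto split: if_splits)
    define Fs where "Fs jj = (\<lambda>n. n - 1) ` Fc (Suc jj)" for jj
    have Fsprop: "(\<forall>i<k. Fs i \<noteq> {} \<and> Fs i \<subseteq> {..<m}) \<and> Fs k \<noteq> {} \<and> finite (Fs k)"
    proof (intro conjI allI impI)
      fix i assume i: "i < k"
      then have si: "Suc i \<in> {1..l}" "Suc i < l" using lk by auto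
      then show "Fs i \<noteq> {}" unfolding Fs_def using Fc by blast
      have "Fc (Suc i) \<subseteq> {1..m}" using Fc[OF si(1)] si(2) unfolding R_def by simp
      then show "Fs i \<subseteq> {..<m}" unfolding Fs_def using m by fastforce
    next
      have "Suc k \<in> {1..l}" using lk by auto
      then show "Fs k \<noteq> {}" "finite (Fs k)" unfolding Fs_def using Fc by auto
    qed
    define t where "t = map (\<lambda>i. \<Union>n\<in>Fs i. B i n) [0..<Suc k]"
    have tX: "t \<in> Xj j" unfolding t_def using B2 Fsprop by blast
    have tnth: "t!i = (\<Union>n\<in>Fs i. B i n)" if "i < l" for i
      unfolding t_def using that lk by (simp del: upt_Suc)
    have tnth2: "t!(i-1) = (\<Union>n\<in>Fc i. H i n)" if i: "i \<in> {1..l}" for i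
    proof -
      have "t!(i-1) = (\<Union>n\<in>Fs (i-1). B (i-1) n)" using tnth i by auto
      moreover have "Fs (i-1) = (\<lambda>n. n - 1) ` Fc i" unfolding Fs_def using i by simp
      ultimately show ?thesis unfolding H_def by simp
    qed
    have "proper t" unfolding proper_def
    proof (intro conjI allI impI)
      show "length t = l" unfolding t_def using lk by simp
      fix i assume i: "i < l"
      have si: "Suc i \<in> {1..l}" using i by auto
      have "finite (Fs i)" "Fs i \<noteq> {}" unfolding Fs_def using Fc[OF si] by auto
      then show "finite (t!i)" "t!i \<noteq> {}" "t!i \<subseteq> {1..}" using tnth[OF i] Bfin by auto
    qed
    then have embD: "emb t \<in> D j" using tX unfolding Xj_def by simp
    have "emb t = g"
    proof
      fix i show "emb t i = g i"
      proof (cases "i \<in> {1..l}")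
        case True
        have "fsum (op i) (y i) (Fc i) = fsum (op i) (x i) (\<Union>n\<in>Fc i. H i n)"
        proof (rule fsum_blocks[OF psi[OF True]])
          show "finite (Fc i)" "Fc i \<noteq> {}" using Fc[OF True] by auto
          show "\<forall>n\<in>Fc i. finite (H i n) \<and> H i n \<noteq> {} \<and> (\<forall>u\<in>H i n. x i u \<in> S i) \<and> fsum (op i) (x i) (H i n) = Some (y i n)"
            using Hfin Hsum[OF True] xS[OF True] by fastforce
          show "\<forall>a\<in>Fc i. \<forall>b\<in>Fc i. a < b \<longrightarrow> (\<forall>u\<in>H i a. \<forall>v\<in>H i b. u < v)"
          proof (intro ballI impI)
            fix a b u v assume ab: "a \<in> Fc i" "b \<in> Fc i" "a < b" "u \<in> H i a" "v \<in> H i b"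
            then have "a \<ge> 1" "b \<ge> 1" using Fc1[OF True] by auto
            then have "a - 1 < b - 1" using ab by simp
            then show "u < v" using block_lt[OF B1'[of "i - 1"]] ab unfolding H_def by blast
          qed
        qed
        then have "fsum (op i) (x i) (t!(i-1)) = Some (g i)" using Fc[OF True] tnth2[OF True] by simp
        then show ?thesis unfolding emb_def using True by simp
      next
        case False
        then have "g i = undefined" using g by (simp add: PiE_iff extensional_def)
        then show ?thesis unfolding emb_def using False by auto
      qed
    qed
    then show "g \<in> D j" using embD by simp
  qed
  show ?thesis using j(1) fin_part inf_part sub by blast
qed

end
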